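(* In the setting of the context, regard the error exponent $K=K(a)$ as a function of the correlation coefficient $a\in[0,1]$ with $\Pi_0$ and $\sigma^2$ fixed. If $\Gamma=\Pi_0/\sigma^2>1$, then $K(a)$ is monotonically decreasing in $a$ on $[0,1]$; in particular its maximum is attained at $a=0$, where $K(0)=D(\mathcal N(0,1)\|\mathcal N(0,1+\Gamma))$.
   Context: Model: fix $a\in[0,1]$, $\Pi_0>0$, $\sigma^2>0$. The signal is a stationary Gaussian first-order autoregressive sequence $s_{i+1}=a s_i+u_i$, $i\ge1$, with $s_1\sim\mathcal N(0,\Pi_0)$ and $u_i$ i.i.d. $\mathcal N(0,Q)$, $Q=\Pi_0(1-a^2)$, independent of $s_1$. Observations follow $H_0: y_i=w_i$ or $H_1: y_i=s_i+w_i$, $w_i$ i.i.d. $\mathcal N(0,\sigma^2)$ independent of the signal; $\Gamma=\Pi_0/\sigma^2$ is the SNR. The error exponent $K$ is $-\lim_{n\to\infty}\frac1n\log P_M(n)$, where $P_M(n)$ is the miss probability of the level-$\alpha$ Neyman–Pearson detector based on $y_1,\dots,y_n$ (independent of $\alpha\in(0,1)$); explicitly $K=\frac{1}{2\pi}\int_0^{2\pi} D(\mathcal N(0,\sigma^2)\|\mathcal N(0,S_y(\omega)))\,d\omega$ with $S_y(\omega)=\sigma^2+\frac{\Pi_0(1-a^2)}{1-2a\cos\omega+a^2}$, $D$ the Kullback–Leibler divergence. *)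

theory Defs
  imports "HOL-Probability.Probability"
begin

definition gauss :: "real \<Rightarrow> real measure" where
  "gauss v = density lborel (\<lambda>x. ennreal (normal_density 0 (sqrt v) x))"

text \<open>Kullback-Leibler divergence D(P||Q) in nats. Note that the library's
  KL_divergence b M N is the divergence of N with respect to M.\<close>
definition KLdiv :: "real measure \<Rightarrow> real measure \<Rightarrow> real" where
  "KLdiv P Q = KL_divergence (exp 1) Q P"

definition spec_y :: "real \<Rightarrow> real \<Rightarrow> real \<Rightarrow> real \<Rightarrow> real" where
  "spec_y Pi0 sigma2 a \<omega> = sigma2 + Pi0 * (1 - a\<^sup>2) / (1 - 2 * a * cos \<omega> + a\<^sup>2)"

definition err_exp :: "real \<Rightarrow> real \<Rightarrow> real \<Rightarrow> real" where
  "err_exp Pi0 sigma2 a =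
     1 / (2 * pi) * integral {0..2*pi} (\<lambda>\<omega>. KLdiv (gauss sigma2) (gauss (spec_y Pi0 sigma2 a \<omega>)))"

end

theory Submission
  imports Defs "HOL-Complex_Analysis.Complex_Analysis"
begin


lemma KL_gauss:
  assumes s: "s > 0" and t: "t > 0"
  shows "KLdiv (gauss s) (gauss t) = (s/t - 1 + ln (t/s)) / 2"
proof -
  let ?f = "normal_density 0 (sqrt s)" and ?g = "normal_density 0 (sqrt t)"
  have gp: "\<And>x. ?g x > 0" using t by (intro normal_density_pos) auto
  have "KLdiv (gauss s) (gauss t) = (\<integral>x. ?f x * log (exp 1) (?f x / ?g x) \<partial>lborel)"
    unfolding KLdiv_def gauss_def
    by (rule lborel.KL_density_density) (use s t gp[THEN less_imp_neq] in \<open>auto simp: normal_density_pos intro!: AE_I2\<close>)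
  also have "\<dots> = (\<integral>x. (?f x * (ln (sqrt t / sqrt s)) + (1/(2 * t) - 1/(2 * s)) * (?f x * (x - 0)^(2*1))) \<partial>lborel)"
  proof (intro Bochner_Integration.integral_cong refl)
    fix x
    have e: "exp (x * x / (t * 2)) = exp (x * x / (s * 2)) * exp ((s * (x * x) - t * (x * x)) / (s * (t * 2)))"
      unfolding exp_add[symmetric] using s t by (simp add: field_simps)
    have h: "?f x / ?g x = (sqrt t / sqrt s) * exp (x^2 * (1/(2 * t) - 1/(2 * s)))"
      using s t e by (simp add: normal_density_def field_simps real_sqrt_mult exp_diff exp_minus power2_eq_square)
    have lg: "log (exp 1) (?f x / ?g x) = ln (sqrt t / sqrt s) + x^2 * (1/(2 * t) - 1/(2 * s))"
      unfolding h log_def using s t by (subst ln_mult) auto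
    then show "?f x * log (exp 1) (?f x / ?g x) = ?f x * (ln (sqrt t / sqrt s)) + (1/(2 * t) - 1/(2 * s)) * (?f x * (x - 0)^(2*1))"
      unfolding lg using s t by (simp add: field_simps power2_eq_square)
  qed
  also have "\<dots> = ln (sqrt t / sqrt s) + (1/(2 * t) - 1/(2 * s)) * s"
  proof -
    have m2: "integrable lborel (\<lambda>x. ?f x * x^2)"
      using integrable_normal_moment[where \<sigma>="sqrt s" and \<mu>=0 and k=2] s by simp
    have m2': "(\<integral>x. ?f x * x^2 \<partial>lborel) = s"
      using integral_normal_moment_even[where \<sigma>="sqrt s" and \<mu>=0 and k=1] s by (simp add: fact_numeral)
    show ?thesis
      using m2 m2' s integrable_normal_density[where \<sigma>="sqrt s" and \<mu>=0] integral_normal_density[where \<sigma>="sqrt s" and \<mu>=0]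
      by (subst Bochner_Integration.integral_add) auto
  qed
  also have "\<dots> = (s/t - 1 + ln (t/s)) / 2"
    using s t by (simp add: ln_div ln_sqrt field_simps)
  finally show ?thesis .
qed


lemma mean_value_circle:
  fixes f :: "complex \<Rightarrow> complex"
  assumes hol: "f holomorphic_on cball 0 1"
  shows "((\<lambda>t. f (cis t)) has_integral (2 * pi * f 0)) {0..2*pi}"
proof -
  have "((\<lambda>u. f u / (u - 0)) has_contour_integral (2 * of_real pi * \<i> * f 0)) (circlepath 0 1)"
    by (rule Cauchy_integral_circlepath)
       (use hol in \<open>auto intro: holomorphic_on_imp_continuous_on holomorphic_on_subset[OF _ ball_subset_cball]\<close>)
  hence "((\<lambda>t. f (0 + complex_of_real 1 * cis t) / (0 + complex_of_real 1 * cis t - 0) * complex_of_real 1 * \<i> * cis t)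
          has_integral (2 * of_real pi * \<i> * f 0)) {0..2*pi}"
    unfolding circlepath_def by (subst (asm) has_contour_integral_part_circlepath_iff) auto
  hence "((\<lambda>t. \<i> * f (cis t)) has_integral (2 * of_real pi * \<i> * f 0)) {0..2*pi}"
    by (rule has_integral_eq[rotated]) (auto simp: cis_neq_zero)
  moreover have "2 * of_real pi * \<i> * f 0 = \<i> * (2 * pi * f 0)" by simp
  ultimately have "((\<lambda>t. \<i> * f (cis t)) has_integral (\<i> * (2 * pi * f 0))) {0..2*pi}"
    by simp
  thus ?thesis
    by (subst (asm) has_integral_mult_right_iff) auto
qed

lemma int_log_poisson:
  fixes r :: real
  assumes r: "0 \<le> r" "r < 1"
  shows "((\<lambda>t. ln (1 - 2*r*cos t + r^2)) has_integral 0) {0..2*pi}"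
proof -
  have nz: "\<And>z. z \<in> cball 0 1 \<Longrightarrow> 1 - complex_of_real r * z \<notin> \<real>\<^sub>\<le>\<^sub>0"
  proof
    fix z :: complex assume z: "z \<in> cball 0 1" and "1 - complex_of_real r * z \<in> \<real>\<^sub>\<le>\<^sub>0"
    then obtain ra where ra: "1 - complex_of_real r * z = complex_of_real ra" "ra \<le> 0"
      by (auto simp: nonpos_Reals_def)
    hence "Re (1 - complex_of_real r * z) = ra" by simp
    hence "1 - r * Re z = ra" by simp
    hence "1 \<le> r * Re z" using ra(2) by simp
    moreover have "Re z \<le> 1"
      using z abs_Re_le_cmod[of z] by auto
    hence "r * Re z \<le> r * 1" using r by (intro mult_left_mono) auto
    ultimately show False using r by simp
  qed
  have hol: "(\<lambda>z. 2 * Ln (1 - complex_of_real r * z)) holomorphic_on cball 0 1"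
    using nz by (auto intro!: holomorphic_intros)
  have "((\<lambda>t. Re (2 * Ln (1 - complex_of_real r * cis t))) has_integral Re (2 * pi * (2 * Ln (1 - complex_of_real r * 0)))) {0..2*pi}"
    using has_integral_Re[OF mean_value_circle[OF hol]] .
  moreover have "Re (2 * Ln (1 - complex_of_real r * cis t)) = ln (1 - 2*r*cos t + r^2)" for t
  proof -
    have ne: "1 - complex_of_real r * cis t \<noteq> 0"
      using nz[of "cis t"] by auto
    have sc: "sin t ^ 2 + cos t ^ 2 = 1" by (rule sin_cos_squared_add)
    have alg: "\<And>c v::real. (1 - r*c)^2 + (-(r * v))^2 = 1 - 2*r*c + r^2 * (v^2 + c^2)"
      by (simp add: power2_eq_square algebra_simps)
    have "(cmod (1 - complex_of_real r * cis t))^2 = (1 - r*cos t)^2 + (-(r* sin t))^2"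
      unfolding cmod_power2 by simp
    also have "\<dots> = 1 - 2*r*cos t + r^2"
      unfolding alg sc by simp
    finally have "(cmod (1 - complex_of_real r * cis t))^2 = 1 - 2*r*cos t + r^2" .
    moreover have "cmod (1 - complex_of_real r * cis t) > 0" using ne by simp
    ultimately have "ln (1 - 2 * r * cos t + r^2) = 2 * ln (cmod (1 - complex_of_real r * cis t))"
      using ln_realpow[of "cmod (1 - complex_of_real r * cis t)" 2] by simp
    then show ?thesis
      using ne by (simp add: Re_Ln)
  qed
  ultimately show ?thesis by simp
qed

lemma int_poisson:
  fixes r :: real
  assumes r: "0 \<le> r" "r < 1"
  shows "((\<lambda>t. (1 - r^2) / (1 - 2*r*cos t + r^2)) has_integral 2*pi) {0..2*pi}"
proof -
  have nz: "\<And>z. z \<in> cball 0 1 \<Longrightarrow> 1 - complex_of_real r * z \<noteq> 0"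
  proof
    fix z :: complex assume z: "z \<in> cball 0 1" and "1 - complex_of_real r * z = 0"
    hence "cmod (complex_of_real r * z) = 1" by (metis norm_one right_minus_eq)
    moreover have "cmod (complex_of_real r * z) \<le> r"
      using z r by (auto simp: norm_mult mult_left_le)
    ultimately show False using r by simp
  qed
  have hol: "(\<lambda>z. (1 + complex_of_real r * z) / (1 - complex_of_real r * z)) holomorphic_on cball 0 1"
    using nz by (auto intro!: holomorphic_intros)
  have "((\<lambda>t. Re ((1 + complex_of_real r * cis t) / (1 - complex_of_real r * cis t))) has_integral
     Re (2 * pi * ((1 + complex_of_real r * 0) / (1 - complex_of_real r * 0)))) {0..2*pi}"
    using has_integral_Re[OF mean_value_circle[OF hol]] .
  moreover have "Re ((1 + complex_of_real r * cis t) / (1 - complex_of_real r * cis t)) = (1 - r^2) / (1 - 2*r*cos t + r^2)" for t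
  proof -
    have sc: "sin t ^ 2 + cos t ^ 2 = 1" by (rule sin_cos_squared_add)
    have alg1: "\<And>c v::real. (1 + r*c) * (1 - r*c) + (r * v) * (-(r * v)) = 1 - r^2 * (v^2 + c^2)"
      by (simp add: power2_eq_square algebra_simps)
    have alg2: "\<And>c v::real. (1 - r*c)^2 + (-(r * v))^2 = 1 - 2*r*c + r^2 * (v^2 + c^2)"
      by (simp add: power2_eq_square algebra_simps)
    have "Re ((1 + complex_of_real r * cis t) / (1 - complex_of_real r * cis t)) =
      ((1 + r*cos t) * (1 - r*cos t) + (r* sin t) * (-(r* sin t))) / ((1 - r*cos t)^2 + (-(r* sin t))^2)"
      unfolding Re_divide by simp
    also have "\<dots> = (1 - r^2) / (1 - 2*r*cos t + r^2)"
      unfolding alg1 alg2 sc by simp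
    finally show ?thesis .
  qed
  ultimately show ?thesis by simp
qed



lemma int_AB:
  fixes A b :: real
  assumes b: "0 \<le> b" and Ab: "2 * b < A"
  shows "((\<lambda>t. ln (A - 2 * b * cos t)) has_integral (2 * pi * ln ((A + sqrt (A^2 - 4 * b^2)) / 2))) {0..2*pi}"
    and "((\<lambda>t. 1 / (A - 2 * b * cos t)) has_integral (2 * pi / sqrt (A^2 - 4 * b^2))) {0..2*pi}"
proof -
  define R where "R = sqrt (A^2 - 4 * b^2)"
  have A0: "A > 0" using b Ab by linarith
  have "4 * b^2 < A^2"
  proof -
    have "(2*b)^2 < A^2" using b Ab by (intro power_strict_mono) auto
    thus ?thesis by (simp add: power_mult_distrib)
  qed
  hence R0: "R > 0" and Rsq: "R^2 = A^2 - 4 * b^2" unfolding R_def by auto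
  define c where "c = (A + R) / 2"
  define r where "r = 2 * b / (A + R)"
  have c0: "c > 0" using A0 R0 unfolding c_def by simp
  have r0: "0 \<le> r" using b A0 R0 unfolding r_def by simp
  have r1: "r < 1" using Ab A0 R0 unfolding r_def by (simp add: field_simps)
  have cr: "c * r = b" unfolding c_def r_def using A0 R0 by (simp add: field_simps)
  have c1: "c * (1 + r^2) = A"
  proof -
    have "c * (1 + r^2) = c + b * r" using cr by (simp add: power2_eq_square algebra_simps)
    also have "\<dots> = ((A + R)^2 + 4 * b^2) / (2 * (A + R))"
      unfolding c_def r_def using A0 R0 by (simp add: field_simps power2_eq_square)
    also have "(A + R)^2 + 4 * b^2 = A * (2 * (A + R))"
      using Rsq by (simp add: power2_eq_square algebra_simps)
    also have "A * (2 * (A + R)) / (2 * (A + R)) = A"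
      using A0 R0 by (intro nonzero_mult_div_cancel_right) auto
    finally show ?thesis .
  qed
  have c2: "c * (1 - r^2) = R"
  proof -
    have "c * (1 - r^2) = c - b * r" using cr by (simp add: power2_eq_square algebra_simps)
    also have "\<dots> = ((A + R)^2 - 4 * b^2) / (2 * (A + R))"
      unfolding c_def r_def using A0 R0 by (simp add: field_simps power2_eq_square)
    also have "(A + R)^2 - 4 * b^2 = R * (2 * (A + R))"
      using Rsq by (simp add: power2_eq_square algebra_simps)
    also have "R * (2 * (A + R)) / (2 * (A + R)) = R"
      using A0 R0 by (intro nonzero_mult_div_cancel_right) auto
    finally show ?thesis .
  qed
  have fact: "A - 2 * b * cos t = c * (1 - 2 * r * cos t + r^2)" for t
    using c1 cr by (simp add: algebra_simps)
  have qpos: "1 - 2 * r * cos t + r^2 > 0" for t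
  proof -
    have "r * cos t \<le> r" using r0 cos_le_one[of t] by (simp add: mult_left_le)
    hence "1 - 2 * r * cos t + r^2 \<ge> (1 - r)^2" by (simp add: power2_eq_square algebra_simps)
    moreover have "(1 - r)^2 > 0" using r1 by simp
    ultimately show ?thesis by linarith
  qed
  have "((\<lambda>t. ln c) has_integral (2 * pi * ln c)) {0..2*pi}"
    using has_integral_const_real[of "ln c" 0 "2*pi"] by simp
  hence "((\<lambda>t. ln c + ln (1 - 2 * r * cos t + r^2)) has_integral (2 * pi * ln c + 0)) {0..2*pi}"
    by (intro has_integral_add int_log_poisson r0 r1)
  moreover have "ln c + ln (1 - 2 * r * cos t + r^2) = ln (A - 2 * b * cos t)" for t
    unfolding fact using c0 qpos[of t] by (simp add: ln_mult)
  ultimately show "((\<lambda>t. ln (A - 2 * b * cos t)) has_integral (2 * pi * ln ((A + sqrt (A^2 - 4 * b^2)) / 2))) {0..2*pi}"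
    unfolding R_def[symmetric] c_def[symmetric] by simp
  have "((\<lambda>t. (1 / R) * ((1 - r^2) / (1 - 2 * r * cos t + r^2))) has_integral ((1/R) * (2 * pi))) {0..2*pi}"
    by (intro has_integral_mult_right int_poisson r0 r1)
  moreover have "(1 / R) * ((1 - r^2) / (1 - 2 * r * cos t + r^2)) = 1 / (A - 2 * b * cos t)" for t
  proof -
    have n1: "1 - r^2 \<noteq> 0" using r0 r1 by (simp add: power2_eq_square) (smt (verit) mult_left_le_one_le)
    have n2: "1 - 2 * r * cos t + r^2 \<noteq> 0" using qpos[of t] by simp
    have g: "\<And>x y z::real. x \<noteq> 0 \<Longrightarrow> y \<noteq> 0 \<Longrightarrow> 1 / (x * y) * (y / z) = 1 / (x * z)"
      by simp
    show ?thesis unfolding fact c2[symmetric] by (rule g) (use c0 n1 in auto)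
  qed
  ultimately show "((\<lambda>t. 1 / (A - 2 * b * cos t)) has_integral (2 * pi / sqrt (A^2 - 4 * b^2))) {0..2*pi}"
    unfolding R_def[symmetric] by simp
qed



lemma sqrt_D: "0 \<le> a \<Longrightarrow> a \<le> 1 \<Longrightarrow> sqrt ((1 + a^2)^2 - 4 * a^2) = 1 - a^2"
proof -
  assume a: "0 \<le> a" "a \<le> 1"
  have "(1 + a^2)^2 - 4 * a^2 = (1 - a^2)^2" by (simp add: power2_eq_square algebra_simps)
  moreover have "1 - a^2 \<ge> 0" using a by (simp add: power_le_one)
  ultimately show ?thesis by simp
qed

lemma err_exp_closed:
  fixes Pi0 sigma2 a :: real
  assumes P: "Pi0 > 0" and sg: "sigma2 > 0" and a: "0 \<le> a" "a < 1"
  defines "g \<equiv> Pi0 / sigma2"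
  defines "A \<equiv> 1 + a^2 + g * (1 - a^2)"
  defines "R \<equiv> sqrt (A^2 - 4 * a^2)"
  shows "err_exp Pi0 sigma2 a = (ln ((A + R) / 2) - g * (1 - a^2) / R) / 2"
proof -
  have g0: "g > 0" unfolding g_def using P sg by simp
  have ua: "1 - a^2 > 0" using a abs_square_less_1[of a] by simp
  have a2: "2 * a < 1 + a^2"
  proof -
    have "(1 - a)^2 > 0" using a by simp
    thus ?thesis by (simp add: power2_eq_square algebra_simps)
  qed
  have aA: "2 * a < A" unfolding A_def using a2 g0 ua by (smt (verit) mult_pos_pos)
  define D where "D = (\<lambda>w. 1 - 2 * a * cos w + a^2)"
  define N where "N = (\<lambda>w. A - 2 * a * cos w)"
  have D0: "D w > 0" for w
  proof -
    have "a * cos w \<le> a" using a cos_le_one[of w] by (simp add: mult_left_le)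
    thus ?thesis unfolding D_def using a2 by linarith
  qed
  have ND: "N w = D w + g * (1 - a^2)" for w unfolding N_def D_def A_def by simp
  have N0: "N w > 0" for w using ND[of w] D0[of w] g0 ua by (smt (verit) mult_pos_pos)
  have Sy: "spec_y Pi0 sigma2 a w = sigma2 * N w / D w" for w
  proof -
    have "Pi0 = g * sigma2" unfolding g_def using sg by simp
    thus ?thesis unfolding spec_y_def ND using D0[of w] sg
      by (simp add: D_def field_simps)
  qed
  have S0: "spec_y Pi0 sigma2 a w > 0" for w unfolding Sy using sg N0[of w] D0[of w] by simp
  have integrand: "KLdiv (gauss sigma2) (gauss (spec_y Pi0 sigma2 a w)) =
      (1/2) * ((- (g * (1 - a^2))) * (1 / N w) + ln (N w) - ln (D w))" for w
  proof -
    have "sigma2 / spec_y Pi0 sigma2 a w = D w / N w"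
      unfolding Sy using sg N0[of w] D0[of w] by simp
    also have "D w = N w - g * (1 - a^2)" using ND[of w] by simp
    also have "(N w - g * (1 - a^2)) / N w = N w / N w - g * (1 - a^2) / N w"
      by (rule diff_divide_distrib)
    also have "\<dots> = 1 - g * (1 - a^2) * (1 / N w)" using N0[of w] by simp
    finally have e1: "sigma2 / spec_y Pi0 sigma2 a w = 1 - g * (1 - a^2) * (1 / N w)" .
    have e2: "ln (spec_y Pi0 sigma2 a w / sigma2) = ln (N w) - ln (D w)"
      unfolding Sy using sg N0[of w] D0[of w] by (simp add: ln_div)
    show ?thesis unfolding KL_gauss[OF sg S0] e1 e2 by simp
  qed
  have h1: "((\<lambda>w. 1 / N w) has_integral (2 * pi / R)) {0..2*pi}"
    unfolding N_def R_def using int_AB(2)[of a A] a aA by simp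
  have h2: "((\<lambda>w. ln (N w)) has_integral (2 * pi * ln ((A + R) / 2))) {0..2*pi}"
    unfolding N_def R_def using int_AB(1)[of a A] a aA by simp
  have h3: "((\<lambda>w. ln (D w)) has_integral 0) {0..2*pi}"
  proof -
    have "((\<lambda>w. ln (1 + a^2 - 2 * a * cos w)) has_integral (2 * pi * ln ((1 + a^2 + sqrt ((1 + a^2)^2 - 4 * a^2)) / 2))) {0..2*pi}"
      using int_AB(1)[of a "1 + a^2"] a a2 by simp
    moreover have "ln ((1 + a^2 + sqrt ((1 + a^2)^2 - 4 * a^2)) / 2) = 0"
      using a by (simp add: sqrt_D)
    ultimately show ?thesis unfolding D_def by (simp add: algebra_simps)
  qed
  have "((\<lambda>w. (1/2) * ((- (g * (1 - a^2))) * (1 / N w) + ln (N w) - ln (D w))) has_integral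
        ((1/2) * ((- (g * (1 - a^2))) * (2 * pi / R) + 2 * pi * ln ((A + R) / 2) - 0))) {0..2*pi}"
    by (intro has_integral_mult_right has_integral_add has_integral_diff h1 h2 h3)
  hence "((\<lambda>w. KLdiv (gauss sigma2) (gauss (spec_y Pi0 sigma2 a w))) has_integral
        ((1/2) * ((- (g * (1 - a^2))) * (2 * pi / R) + 2 * pi * ln ((A + R) / 2) - 0))) {0..2*pi}"
    unfolding integrand .
  hence "integral {0..2*pi} (\<lambda>w. KLdiv (gauss sigma2) (gauss (spec_y Pi0 sigma2 a w))) =
        (1/2) * ((- (g * (1 - a^2))) * (2 * pi / R) + 2 * pi * ln ((A + R) / 2) - 0)"
    by (rule integral_unique)
  moreover have "R > 0"
  proof -
    have "(2*a)^2 < A^2" using a aA by (intro power_strict_mono) auto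
    thus ?thesis unfolding R_def by (simp add: power_mult_distrib)
  qed
  ultimately show ?thesis unfolding err_exp_def by (simp add: field_simps)
qed



definition Gf :: "real \<Rightarrow> real \<Rightarrow> real" where
  "Gf g z = ln ((z - 4) / (4 * (g - 1))) - (g / (g - 1)) * ((z - 4 * g) / (z + 4 * g))"

definition zf :: "real \<Rightarrow> real \<Rightarrow> real" where
  "zf g a = (sqrt (4 * g + (g - 1)^2 * (1 - a^2)) + (g - 1) * sqrt (1 - a^2))^2"

lemma G_deriv:
  fixes g x :: real
  assumes g: "g > 1" and x: "x > 4"
  shows "(Gf g has_real_derivative (1 / (x - 4) - (g / (g - 1)) * (8 * g / (x + 4 * g)^2))) (at x)"
proof -
  have c0: "4 * (g - 1) \<noteq> 0" using g by simp
  have i1: "((\<lambda>z. (z - 4) / (4 * (g - 1))) has_real_derivative ((1 - 0) * (4 * (g - 1)) - (x - 4) * 0) / ((4 * (g - 1)) * (4 * (g - 1)))) (at x)"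
    by (intro DERIV_divide derivative_intros c0)
  have q0: "(x - 4) / (4 * (g - 1)) > 0" using g x by simp
  have d1: "((\<lambda>z. ln ((z - 4) / (4 * (g - 1)))) has_real_derivative
       (1 / ((x - 4) / (4 * (g - 1)))) * (((1 - 0) * (4 * (g - 1)) - (x - 4) * 0) / ((4 * (g - 1)) * (4 * (g - 1))))) (at x)"
    by (rule DERIV_chain2[OF DERIV_ln_divide[OF q0] i1])
  have e1: "(1 / ((x - 4) / (4 * (g - 1)))) * (((1 - 0) * (4 * (g - 1)) - (x - 4) * 0) / ((4 * (g - 1)) * (4 * (g - 1)))) = 1 / (x - 4)"
  proof -
    have "((1 - 0) * (4 * (g - 1)) - (x - 4) * 0) / ((4 * (g - 1)) * (4 * (g - 1))) = 1 / (4 * (g - 1))"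
      using c0 by simp
    moreover have "(1 / ((x - 4) / (4 * (g - 1)))) * (1 / (4 * (g - 1))) = 1 / (x - 4)"
      using c0 x by simp
    ultimately show ?thesis by simp
  qed
  have n0: "x + 4 * g \<noteq> 0" using g x by simp
  have d2: "((\<lambda>z. (z - 4 * g) / (z + 4 * g)) has_real_derivative
      ((1 - 0) * (x + 4 * g) - (x - 4 * g) * (1 + 0)) / ((x + 4 * g) * (x + 4 * g))) (at x)"
    by (intro DERIV_divide derivative_intros n0)
  have e2: "((1 - 0) * (x + 4 * g) - (x - 4 * g) * (1 + 0)) / ((x + 4 * g) * (x + 4 * g)) = 8 * g / (x + 4 * g)^2"
    by (simp add: power2_eq_square algebra_simps)
  have "((\<lambda>z. ln ((z - 4) / (4 * (g - 1))) - (g / (g - 1)) * ((z - 4 * g) / (z + 4 * g))) has_real_derivative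
      (1 / (x - 4) - (g / (g - 1)) * (8 * g / (x + 4 * g)^2))) (at x)"
    using d1[unfolded e1] d2[unfolded e2] by (intro DERIV_diff DERIV_cmult)
  thus ?thesis unfolding Gf_def[abs_def] .
qed

lemma G_deriv_nonneg:
  fixes g x :: real
  assumes g: "g > 1" and x: "4 * g \<le> x" "x \<le> 4 * g^2"
  shows "(g / (g - 1)) * (8 * g / (x + 4 * g)^2) \<le> 1 / (x - 4)"
proof -
  define h where "h = g - 1"
  have h0: "h > 0" and gh: "g = 1 + h" using g unfolding h_def by auto
  have x4: "x > 4" using g x by linarith
  have key: "8 * g^2 * (x - 4) \<le> h * (x + 4 * g)^2"
  proof -
    have id: "h * (x + 4 * g)^2 - 8 * g^2 * (x - 4) = h * (x - 4 * g)^2 + 8 * g * ((h - 1) * x + 4 * g)"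
      unfolding gh by (simp add: power2_eq_square algebra_simps)
    have "(h - 1) * x + 4 * g \<ge> 0"
    proof (cases "h \<ge> 1")
      case True
      hence "(h - 1) * x \<ge> 0" using x4 by (intro mult_nonneg_nonneg) auto
      thus ?thesis using g by linarith
    next
      case False
      hence "(h - 1) * x \<ge> (h - 1) * (4 * g^2)" using x by (intro mult_left_mono_neg) auto
      moreover have "(h - 1) * (4 * g^2) + 4 * g = 4 * g * h^2"
        unfolding gh by (simp add: power2_eq_square algebra_simps)
      moreover have "4 * g * h^2 \<ge> 0" using g by simp
      ultimately show ?thesis by linarith
    qed
    hence "8 * g * ((h - 1) * x + 4 * g) \<ge> 0" using g by simp
    moreover have "h * (x - 4 * g)^2 \<ge> 0" using h0 by simp
    ultimately have "h * (x - 4 * g)^2 + 8 * g * ((h - 1) * x + 4 * g) \<ge> 0" by linarith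
    thus ?thesis using id by linarith
  qed
  have p1: "(x + 4 * g)^2 > 0" using x4 g by simp
  define X where "X = (x + 4 * g)^2"
  have hX: "h * X > 0" unfolding X_def using h0 p1 by simp
  have L: "(g / (g - 1)) * (8 * g / (x + 4 * g)^2) = 8 * g^2 / (h * X)"
    unfolding h_def X_def by (simp add: power2_eq_square)
  have "8 * g^2 \<le> h * X / (x - 4)" using key x4 unfolding X_def by (simp add: le_divide_eq)
  hence "8 * g^2 / (h * X) \<le> (h * X / (x - 4)) / (h * X)"
    using hX by (intro divide_right_mono) auto
  also have "\<dots> = 1 / (x - 4)" using hX x4 h0 p1 unfolding X_def by (simp add: field_simps)
  finally show ?thesis unfolding L .
qed

lemma G_mono:
  fixes g z1 z2 :: real
  assumes g: "g > 1" and z: "4 * g \<le> z1" "z1 \<le> z2" "z2 \<le> 4 * g^2"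
  shows "Gf g z1 \<le> Gf g z2"
proof (rule DERIV_nonneg_imp_nondecreasing[OF z(2)])
  fix x assume x: "z1 \<le> x" "x \<le> z2"
  hence x': "4 * g \<le> x" "x \<le> 4 * g^2" using z by auto
  hence "x > 4" using g by linarith
  thus "\<exists>y. DERIV (Gf g) x :> y \<and> 0 \<le> y"
    using G_deriv[OF g] G_deriv_nonneg[OF g x'] by force
qed

lemma G_4g: "(g::real) > 1 \<Longrightarrow> Gf g (4 * g) = 0"
  unfolding Gf_def by simp

lemma z_1: "(g::real) > 1 \<Longrightarrow> zf g 1 = 4 * g"
  unfolding zf_def by simp

lemma z_bounds:
  fixes g a :: real
  assumes g: "g > 1" and a: "0 \<le> a" "a \<le> 1"
  shows "4 * g \<le> zf g a" "zf g a \<le> 4 * g^2"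
proof -
  define t where "t = sqrt (1 - a^2)"
  have a2: "a^2 \<le> 1" using a by (simp add: power_le_one)
  have t0: "0 \<le> t" and t1: "t \<le> 1" unfolding t_def using a2 a by auto
  have tt: "t^2 = 1 - a^2" unfolding t_def using a2 by simp
  have z: "zf g a = (sqrt (4 * g + (g - 1)^2 * t^2) + (g - 1) * t)^2"
    unfolding zf_def tt by (simp add: t_def)
  have "sqrt (4 * g) \<le> sqrt (4 * g + (g - 1)^2 * t^2)" by simp
  moreover have "0 \<le> (g - 1) * t" using g t0 by simp
  ultimately have "sqrt (4 * g) \<le> sqrt (4 * g + (g - 1)^2 * t^2) + (g - 1) * t" by linarith
  hence "(sqrt (4 * g))^2 \<le> (sqrt (4 * g + (g - 1)^2 * t^2) + (g - 1) * t)^2"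
    using g by (intro power_mono) auto
  thus "4 * g \<le> zf g a" unfolding z using g by simp
  have "t^2 \<le> 1" using t0 t1 by (simp add: power_le_one)
  hence "(g - 1)^2 * t^2 \<le> (g - 1)^2" by (simp add: mult_left_le)
  hence "sqrt (4 * g + (g - 1)^2 * t^2) \<le> sqrt (4 * g + (g - 1)^2)" by simp
  also have "4 * g + (g - 1)^2 = (g + 1)^2" by (simp add: power2_eq_square algebra_simps)
  also have "sqrt ((g + 1)^2) = g + 1" using g by simp
  finally have q: "sqrt (4 * g + (g - 1)^2 * t^2) \<le> g + 1" .
  have "(g - 1) * t \<le> g - 1" using g t1 by (simp add: mult_left_le)
  hence "sqrt (4 * g + (g - 1)^2 * t^2) + (g - 1) * t \<le> 2 * g" using q by linarith
  hence "(sqrt (4 * g + (g - 1)^2 * t^2) + (g - 1) * t)^2 \<le> (2 * g)^2"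
    using g t0 by (intro power_mono) auto
  thus "zf g a \<le> 4 * g^2" unfolding z by (simp add: power_mult_distrib)
qed

lemma z_anti:
  fixes g a1 a2 :: real
  assumes g: "g > 1" and a: "0 \<le> a1" "a1 \<le> a2" "a2 \<le> 1"
  shows "zf g a2 \<le> zf g a1"
proof -
  have "a1^2 \<le> a2^2" using a by (intro power_mono) auto
  hence le: "1 - a2^2 \<le> 1 - a1^2" by simp
  have a22: "a2^2 \<le> 1" using a by (simp add: power_le_one)
  hence st: "sqrt (1 - a2^2) \<le> sqrt (1 - a1^2)" using le by simp
  have "(g - 1)^2 * (1 - a2^2) \<le> (g - 1)^2 * (1 - a1^2)" using le by (simp add: mult_left_mono)
  hence s1: "sqrt (4 * g + (g - 1)^2 * (1 - a2^2)) \<le> sqrt (4 * g + (g - 1)^2 * (1 - a1^2))" by simp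
  have s2: "(g - 1) * sqrt (1 - a2^2) \<le> (g - 1) * sqrt (1 - a1^2)" using st g by simp
  have "sqrt (4 * g + (g - 1)^2 * (1 - a2^2)) + (g - 1) * sqrt (1 - a2^2) \<le>
        sqrt (4 * g + (g - 1)^2 * (1 - a1^2)) + (g - 1) * sqrt (1 - a1^2)"
    using s1 s2 by linarith
  moreover have "0 \<le> sqrt (4 * g + (g - 1)^2 * (1 - a2^2)) + (g - 1) * sqrt (1 - a2^2)"
    using g a22 by simp
  ultimately show ?thesis unfolding zf_def by (intro power_mono) auto
qed



lemma closed_eq_G:
  fixes g a :: real
  assumes g: "g > 1" and a: "0 \<le> a" "a < 1"
  shows "ln ((1 + a^2 + g * (1 - a^2) + sqrt ((1 + a^2 + g * (1 - a^2))^2 - 4 * a^2)) / 2)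
          - g * (1 - a^2) / sqrt ((1 + a^2 + g * (1 - a^2))^2 - 4 * a^2) = Gf g (zf g a)"
proof -
  define t where "t = sqrt (1 - a^2)"
  define h where "h = g - 1"
  define Q where "Q = sqrt (4 * g + h^2 * t^2)"
  have a2: "a^2 < 1" using a abs_square_less_1[of a] by simp
  have t0: "t > 0" unfolding t_def using a2 by simp
  have tt: "t^2 = 1 - a^2" unfolding t_def using a2 by simp
  have h0: "h > 0" and gh: "g = 1 + h" unfolding h_def using g by auto
  have Q0: "Q > 0" unfolding Q_def using g by (simp add: add_pos_nonneg)
  have QQ: "Q^2 = 4 * g + h^2 * t^2" unfolding Q_def using g by (simp add: add_nonneg_nonneg)
  have aa: "a^2 = 1 - t^2" using tt by simp
  have A: "1 + a^2 + g * (1 - a^2) = 2 + h * t^2" unfolding aa gh by (simp add: algebra_simps)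
  have "(2 + h * t^2)^2 - 4 * (1 - t^2) - (t * Q)^2 = t^2 * ((4 * g + h^2 * t^2) - Q^2)"
    unfolding gh by (simp add: power2_eq_square algebra_simps)
  hence e: "(2 + h * t^2)^2 - 4 * a^2 = (t * Q)^2" unfolding QQ aa by simp
  have R: "sqrt ((1 + a^2 + g * (1 - a^2))^2 - 4 * a^2) = t * Q"
    by (simp only: A e) (use t0 Q0 in simp)
  have z: "zf g a = (Q + h * t)^2"
    unfolding zf_def Q_def h_def t_def[symmetric] tt[symmetric] using t0 by simp
  have i1: "(Q + h * t)^2 - 4 - 2 * h * (2 + h * t^2 + t * Q) = Q^2 - (4 * g + h^2 * t^2)"
    unfolding gh by (simp add: power2_eq_square algebra_simps)
  have i2: "(Q + h * t)^2 - 4 * g - 2 * h * t * (Q + h * t) = Q^2 - (4 * g + h^2 * t^2)"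
    by (simp add: power2_eq_square algebra_simps)
  have i3: "(Q + h * t)^2 + 4 * g - 2 * Q * (Q + h * t) = (4 * g + h^2 * t^2) - Q^2"
    by (simp add: power2_eq_square algebra_simps)
  have j1: "(Q + h * t)^2 - 4 = 2 * h * (2 + h * t^2 + t * Q)" using i1 QQ by simp
  have j2: "(Q + h * t)^2 - 4 * g = 2 * h * t * (Q + h * t)" using i2 QQ by simp
  have j3: "(Q + h * t)^2 + 4 * g = 2 * Q * (Q + h * t)" using i3 QQ by simp
  have gm: "g - 1 = h" unfolding h_def ..
  have pos: "Q + h * t > 0" using Q0 h0 t0 by (simp add: add_pos_nonneg)
  have "Gf g (zf g a) = ln (2 * h * (2 + h * t^2 + t * Q) / (4 * h)) - (g / h) * (2 * h * t * (Q + h * t) / (2 * Q * (Q + h * t)))"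
    by (simp only: Gf_def z j1 j2 j3 gm)
  also have "2 * h * (2 + h * t^2 + t * Q) / (4 * h) = (2 + h * t^2 + t * Q) / 2"
    using h0 by simp
  also have "(g / h) * (2 * h * t * (Q + h * t) / (2 * Q * (Q + h * t))) = g * t / Q"
  proof -
    have "2 * h * t * (Q + h * t) / (2 * Q * (Q + h * t)) = (h * t) / Q * ((2 * (Q + h * t)) / (2 * (Q + h * t)))"
      by (simp add: ac_simps)
    also have "\<dots> = h * t / Q" using pos by simp
    finally show ?thesis using h0 by simp
  qed
  finally have G: "Gf g (zf g a) = ln ((2 + h * t^2 + t * Q) / 2) - g * t / Q" .
  have "g * (1 - a^2) / (t * Q) = g * t / Q"
    unfolding tt[symmetric] using t0 Q0 by (simp add: power2_eq_square)
  thus ?thesis unfolding G R unfolding A by simp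
qed

lemma err_exp_1:
  fixes Pi0 sigma2 :: real
  assumes sg: "sigma2 > 0"
  shows "err_exp Pi0 sigma2 1 = 0"
proof -
  have "KLdiv (gauss sigma2) (gauss (spec_y Pi0 sigma2 1 w)) = 0" for w
    unfolding spec_y_def using KL_gauss[OF sg sg] sg by simp
  thus ?thesis unfolding err_exp_def by simp
qed

lemma err_exp_z:
  fixes Pi0 sigma2 a :: real
  assumes P: "Pi0 > 0" and sg: "sigma2 > 0" and g: "Pi0 / sigma2 > 1" and a: "0 \<le> a" "a \<le> 1"
  shows "err_exp Pi0 sigma2 a = Gf (Pi0 / sigma2) (zf (Pi0 / sigma2) a) / 2"
proof (cases "a = 1")
  case True
  thus ?thesis using err_exp_1[OF sg] z_1[OF g] G_4g[OF g] by simp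
next
  case False
  hence a1: "a < 1" using a by simp
  show ?thesis
    using err_exp_closed[OF P sg a(1) a1] closed_eq_G[OF g a(1) a1] by simp
qed

theorem theorem3:
  fixes Pi0 sigma2 :: real
  assumes "Pi0 > 0" and "sigma2 > 0" and "Pi0 / sigma2 > 1"
  shows "antimono_on {0..1} (err_exp Pi0 sigma2) \<and>
         (\<forall>a\<in>{0..1}. err_exp Pi0 sigma2 a \<le> err_exp Pi0 sigma2 0) \<and>
         err_exp Pi0 sigma2 0 = KLdiv (gauss 1) (gauss (1 + Pi0 / sigma2))"
proof -
  define g where "g = Pi0 / sigma2"
  have g1: "g > 1" using assms(3) unfolding g_def .
  have anti: "antimono_on {0..1} (err_exp Pi0 sigma2)"
  proof (rule monotone_onI)
    fix x y :: real assume x: "x \<in> {0..1}" and y: "y \<in> {0..1}" and xy: "x \<le> y"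
    have "zf g y \<le> zf g x" using z_anti[OF g1, of x y] x y xy by auto
    hence "Gf g (zf g y) \<le> Gf g (zf g x)"
      using G_mono[OF g1] z_bounds[OF g1, of x] z_bounds[OF g1, of y] x y by auto
    thus "err_exp Pi0 sigma2 y \<le> err_exp Pi0 sigma2 x"
      using err_exp_z[OF assms, of x] err_exp_z[OF assms, of y] x y unfolding g_def by auto
  qed
  moreover have "\<forall>a\<in>{0..1}. err_exp Pi0 sigma2 a \<le> err_exp Pi0 sigma2 0"
    using anti unfolding monotone_on_def by auto
  moreover have "err_exp Pi0 sigma2 0 = KLdiv (gauss 1) (gauss (1 + Pi0 / sigma2))"
  proof -
    have sp: "spec_y Pi0 sigma2 0 w = sigma2 + Pi0" for w unfolding spec_y_def by simp
    have pos: "sigma2 + Pi0 > 0" using assms by simp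
    have "err_exp Pi0 sigma2 0 = KLdiv (gauss sigma2) (gauss (sigma2 + Pi0))"
      unfolding err_exp_def sp by simp
    also have "\<dots> = (sigma2 / (sigma2 + Pi0) - 1 + ln ((sigma2 + Pi0) / sigma2)) / 2"
      by (rule KL_gauss[OF assms(2) pos])
    also have "\<dots> = (1 / (1 + Pi0 / sigma2) - 1 + ln ((1 + Pi0 / sigma2) / 1)) / 2"
      using assms(2) by (simp add: field_simps)
    also have "\<dots> = KLdiv (gauss 1) (gauss (1 + Pi0 / sigma2))"
      using assms by (intro KL_gauss[symmetric]) (auto simp: add_pos_pos)
    finally show ?thesis .
  qed
  ultimately show ?thesis by blast
qed

end
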